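(* Let $I_1,\dots,I_t\subset S$ be monomial ideals, where each $I_j$ is generated in a single degree $d_j$, $d_1\le\cdots\le d_t$, and each $I_j$ has linear quotients with respect to a fixed ordering of $\mathcal{G}(I_j)$. Suppose the following property $( * )$ holds: for all $u\in\mathcal{G}(I_i)$ and $v\in\mathcal{G}(I_j)$ with $i<j$ and $\deg(u:v)>1$, there exists a monomial $w$ belonging to $(I_1\cup\cdots\cup I_{j-1})\cup\{w\in\mathcal{G}(I_j): w \text{ precedes } v \text{ in the fixed linear quotients order of } I_j\}$ such that $\deg(w:v)=1$ and $w:v$ divides $u:v$. Then $I=I_1+\cdots+I_t$ has linear quotients.
   Context: $S=K[x_1,\dots,x_n]$. For a monomial ideal $I$, $\mathcal{G}(I)$ is its minimal monomial generating set. A monomial ideal $I$ has linear quotients if $\mathcal{G}(I)$ can be ordered $u_1,\dots,u_s$ so that for each $i=2,\dots,s$ the colon ideal $(u_1,\dots,u_{i-1}):(u_i)$ is generated by variables; such an ordering is a linear quotients order. For monomials $u,v$, $u:v=u/\gcd(u,v)$. *)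

theory Defs
  imports Main
begin

text \<open>Monomials of S = K[x_1,...,x_n] are encoded by exponent vectors
  nat \<Rightarrow> nat supported in {..<n} (variable x_(i+1) has index i).
  A monomial ideal is encoded by the set of monomials it contains
  (this determines it, and K plays no role).\<close>

type_synonym monom = "nat \<Rightarrow> nat"

definition is_monom :: "nat \<Rightarrow> monom \<Rightarrow> bool" where
  "is_monom n m \<longleftrightarrow> (\<forall>i\<ge>n. m i = 0)"

definition mdeg :: "nat \<Rightarrow> monom \<Rightarrow> nat" where
  "mdeg n m = (\<Sum>i<n. m i)"

definition mdvd :: "monom \<Rightarrow> monom \<Rightarrow> bool" where
  "mdvd u v \<longleftrightarrow> (\<forall>i. u i \<le> v i)"

text \<open>u : v = u / gcd(u,v)\<close>
definition mcolon :: "monom \<Rightarrow> monom \<Rightarrow> monom" where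
  "mcolon u v = (\<lambda>i. u i - min (u i) (v i))"

definition monomial_ideal :: "nat \<Rightarrow> monom set \<Rightarrow> bool" where
  "monomial_ideal n I \<longleftrightarrow> (\<forall>u\<in>I. is_monom n u) \<and>
     (\<forall>u\<in>I. \<forall>v. is_monom n v \<and> mdvd u v \<longrightarrow> v \<in> I)"

definition mgens :: "monom set \<Rightarrow> monom set" where
  "mgens I = {u\<in>I. \<forall>v\<in>I. mdvd v u \<longrightarrow> v = u}"

definition gen_ideal :: "nat \<Rightarrow> monom set \<Rightarrow> monom set" where
  "gen_ideal n A = {v. is_monom n v \<and> (\<exists>u\<in>A. mdvd u v)}"

definition colon_ideal :: "nat \<Rightarrow> monom set \<Rightarrow> monom \<Rightarrow> monom set" where
  "colon_ideal n J u = {m. is_monom n m \<and> (\<lambda>i. m i + u i) \<in> J}"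

definition generated_by_variables :: "nat \<Rightarrow> monom set \<Rightarrow> bool" where
  "generated_by_variables n J \<longleftrightarrow> (\<forall>m\<in>mgens J. mdeg n m = 1)"

definition lq_order :: "nat \<Rightarrow> monom set \<Rightarrow> monom list \<Rightarrow> bool" where
  "lq_order n I us \<longleftrightarrow> distinct us \<and> set us = mgens I \<and>
     (\<forall>i. 1 \<le> i \<and> i < length us \<longrightarrow>
        generated_by_variables n (colon_ideal n (gen_ideal n (set (take i us))) (us ! i)))"

definition has_linear_quotients :: "nat \<Rightarrow> monom set \<Rightarrow> bool" where
  "has_linear_quotients n I \<longleftrightarrow> (\<exists>us. lq_order n I us)"

definition precedes :: "monom list \<Rightarrow> monom \<Rightarrow> monom \<Rightarrow> bool" where
  "precedes us w v \<longleftrightarrow> (\<exists>p q. p < q \<and> q < length us \<and> us ! p = w \<and> us ! q = v)"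

end

theory Submission imports Defs begin
lemma mdvd_refl: "mdvd u u" by (simp add: mdvd_def)
lemma mdvd_trans: "mdvd u v \<Longrightarrow> mdvd v w \<Longrightarrow> mdvd u w" unfolding mdvd_def using le_trans by blast
lemma mdvd_monom: "is_monom n v \<Longrightarrow> mdvd u v \<Longrightarrow> is_monom n u"
  unfolding is_monom_def mdvd_def by (metis le_zero_eq)
lemma mdvd_eq: assumes "is_monom n v" "mdvd u v" "mdeg n v \<le> mdeg n u" shows "u = v"
proof (rule ccontr)
  assume "u \<noteq> v"
  then obtain i where i: "u i \<noteq> v i" by blast
  have um: "is_monom n u" using assms mdvd_monom by blast
  have "i < n" using i assms(1) um unfolding is_monom_def by (metis not_less)
  moreover have "u i < v i" using i assms(2) unfolding mdvd_def by (simp add: order_less_le)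
  ultimately have "(\<Sum>i<n. u i) < (\<Sum>i<n. v i)"
    using assms(2) unfolding mdvd_def by (intro sum_strict_mono_ex1) auto
  then show False using assms(3) unfolding mdeg_def by simp
qed
lemma mgensD: "u \<in> mgens A \<Longrightarrow> u \<in> A"
  unfolding mgens_def by blast
lemma mgens_min: "u \<in> mgens A \<Longrightarrow> x \<in> A \<Longrightarrow> mdvd x u \<Longrightarrow> x = u"
  unfolding mgens_def by blast
lemma mgensI: "u \<in> A \<Longrightarrow> (\<And>x. x \<in> A \<Longrightarrow> mdvd x u \<Longrightarrow> x = u) \<Longrightarrow> u \<in> mgens A"
  unfolding mgens_def by blast
lemma exists_mgen: assumes "\<forall>x\<in>A. is_monom n x" "m \<in> A" shows "\<exists>g\<in>mgens A. mdvd g m"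
  using assms(2)
proof (induction "mdeg n m" arbitrary: m rule: less_induct)
  case less
  show ?case
  proof (cases "m \<in> mgens A")
    case True then show ?thesis using mdvd_refl by blast
  next
    case False
    then obtain v where v: "v \<in> A" "mdvd v m" "v \<noteq> m" using less.prems unfolding mgens_def by blast
    have "mdeg n v < mdeg n m" using mdvd_eq[of n m v] v assms(1) less.prems by fastforce
    then obtain g where "g \<in> mgens A" "mdvd g v" using less.hyps v by blast
    then show ?thesis using v mdvd_trans by blast
  qed
qed
lemma mcolon_dvd: "mdvd u (\<lambda>i. m i + v i) \<Longrightarrow> mdvd (mcolon u v) m"
  unfolding mdvd_def mcolon_def by (simp add: le_diff_conv min_def)
lemma dvd_mcolon_add: "mdvd u (\<lambda>i. mcolon u v i + v i)"
  unfolding mdvd_def mcolon_def by (simp add: min_def)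
lemma mcolon_monom: "is_monom n u \<Longrightarrow> is_monom n (mcolon u v)"
  unfolding is_monom_def mcolon_def by simp
lemma mcolon_mono: "mdvd u' u \<Longrightarrow> mdvd (mcolon u' v) (mcolon u v)"
  unfolding mdvd_def mcolon_def by (simp add: min_def) (meson diff_le_mono le_trans nat_le_linear)
lemma mcolon_deg0: assumes "is_monom n u" "mdeg n (mcolon u v) = 0" shows "mdvd u v"
  unfolding mdvd_def
proof
  fix i show "u i \<le> v i"
  proof (cases "i < n")
    case True
    then have "mcolon u v i = 0" using assms(2) unfolding mdeg_def by simp
    then show ?thesis by (simp add: mcolon_def min_def split: if_splits)
  next
    case False then show ?thesis using assms(1) by (simp add: is_monom_def)
  qed
qed
lemma add_monom: "is_monom n m \<Longrightarrow> is_monom n v \<Longrightarrow> is_monom n (\<lambda>i. m i + v i)"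
  unfolding is_monom_def by simp
lemma key_less: fixes a b a1 b1 N :: nat assumes "a < N" "b < N"
  shows "a1 * N + a < b1 * N + b \<longleftrightarrow> a1 < b1 \<or> (a1 = b1 \<and> a < b)"
proof -
  have *: "x1 * N + x < y1 * N + y" if "x1 < y1" "x < N" for x1 y1 x y :: nat
  proof -
    have "Suc x1 * N \<le> y1 * N" using that by (intro mult_le_mono1) simp
    then show ?thesis using that by simp
  qed
  show ?thesis
  proof (cases a1 b1 rule: linorder_cases)
    case less then show ?thesis using *[of a1 b1 a b] assms by simp
  next
    case equal then show ?thesis by simp
  next
    case greater then show ?thesis using *[of b1 a1 b a] assms by simp
  qed
qed
lemma list_by_key:
  fixes f :: "'a \<Rightarrow> nat"
  assumes "finite G" "inj_on f G"
  shows "\<exists>L. distinct L \<and> set L = G \<and> (\<forall>i<length L. L ! i \<in> G \<and> set (take i L) = {x\<in>G. f x < f (L ! i)})"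
proof -
  define S where "S = sorted_list_of_set (f ` G)"
  define g where "g = the_inv_into G f"
  have fg: "\<And>y. y \<in> f ` G \<Longrightarrow> f (g y) = y" "\<And>y. y \<in> f ` G \<Longrightarrow> g y \<in> G"
    using assms by (auto simp: g_def f_the_inv_into_f the_inv_into_f_f)
  have gf: "\<And>x. x \<in> G \<Longrightarrow> g (f x) = x" using assms by (simp add: g_def the_inv_into_f_f)
  have sS: "set S = f ` G" and dS: "distinct S" and srt: "sorted S" using assms by (auto simp: S_def)
  have ss: "sorted_wrt (<) S" using srt dS by (simp add: strict_sorted_iff)
  define L where "L = map g S"
  have injg: "inj_on g (set S)" using sS fg by (metis inj_on_inverseI)
  have "distinct L" unfolding L_def using dS injg by (simp add: distinct_map)
  moreover have "set L = G" unfolding L_def using sS gf fg by force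
  moreover have "\<forall>i<length L. L ! i \<in> G \<and> set (take i L) = {x\<in>G. f x < f (L ! i)}"
  proof (intro allI impI conjI)
    fix i assume i: "i < length L"
    then have iS: "i < length S" by (simp add: L_def)
    have Si: "S ! i \<in> f ` G" using iS sS nth_mem by blast
    show "L ! i \<in> G" using iS fg Si by (simp add: L_def)
    have fLi: "f (L ! i) = S ! i" using iS fg Si by (simp add: L_def)
    have tk: "set (take i S) = {y \<in> f ` G. y < S ! i}"
    proof
      show "set (take i S) \<subseteq> {y \<in> f ` G. y < S ! i}"
      proof
        fix y assume "y \<in> set (take i S)"
        then obtain k where k: "k < i" "y = S ! k" using iS
          by (auto simp: in_set_conv_nth)
        then show "y \<in> {y \<in> f ` G. y < S ! i}" using ss iS sS
          by (auto simp: sorted_wrt_nth_less)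
      qed
      show "{y \<in> f ` G. y < S ! i} \<subseteq> set (take i S)"
      proof
        fix y assume y: "y \<in> {y \<in> f ` G. y < S ! i}"
        then obtain k where k: "k < length S" "y = S ! k" using sS by (metis (mono_tags, lifting) in_set_conv_nth mem_Collect_eq)
        have "k < i"
        proof (rule ccontr)
          assume "\<not> k < i"
          then have "S ! i \<le> S ! k" using srt k by (simp add: sorted_nth_mono)
          then show False using y k by simp
        qed
        then show "y \<in> set (take i S)" using k iS by (auto simp: in_set_conv_nth)
      qed
    qed
    have "set (take i L) = g ` set (take i S)" by (simp add: L_def take_map)
    also have "\<dots> = {x\<in>G. f x < f (L ! i)}" unfolding tk fLi using fg gf by force
    finally show "set (take i L) = {x\<in>G. f x < f (L ! i)}" .
  qed
  ultimately show ?thesis by blast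
qed

theorem lemma3p1:
  fixes n t :: nat and I :: "nat \<Rightarrow> monom set" and d :: "nat \<Rightarrow> nat"
    and ord :: "nat \<Rightarrow> monom list"
  assumes ideals: "\<And>j. 1 \<le> j \<Longrightarrow> j \<le> t \<Longrightarrow> monomial_ideal n (I j)"
    and single_degree: "\<And>j u. 1 \<le> j \<Longrightarrow> j \<le> t \<Longrightarrow> u \<in> mgens (I j) \<Longrightarrow> mdeg n u = d j"
    and degs_sorted: "\<And>i j. 1 \<le> i \<Longrightarrow> i \<le> j \<Longrightarrow> j \<le> t \<Longrightarrow> d i \<le> d j"
    and lq: "\<And>j. 1 \<le> j \<Longrightarrow> j \<le> t \<Longrightarrow> lq_order n (I j) (ord j)"
    and star: "\<And>i j u v. 1 \<le> i \<Longrightarrow> i < j \<Longrightarrow> j \<le> t \<Longrightarrow> u \<in> mgens (I i) \<Longrightarrow>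
                 v \<in> mgens (I j) \<Longrightarrow> mdeg n (mcolon u v) > 1 \<Longrightarrow>
                 \<exists>w. (w \<in> (\<Union>k\<in>{1..<j}. I k) \<or> (w \<in> mgens (I j) \<and> precedes (ord j) w v)) \<and>
                     mdeg n (mcolon w v) = 1 \<and> mdvd (mcolon w v) (mcolon u v)"
  shows "has_linear_quotients n (\<Union>j\<in>{1..t}. I j)"
proof -
  define I' where "I' = (\<Union>j\<in>{1..t}. I j)"
  define G where "G = mgens I'"
  have GI: "G \<subseteq> I'" unfolding G_def using mgensD by blast
  have monoI: "\<And>k x. 1 \<le> k \<Longrightarrow> k \<le> t \<Longrightarrow> x \<in> I k \<Longrightarrow> is_monom n x"
    using ideals unfolding monomial_ideal_def by blast
  have closeI: "\<And>k x y. 1 \<le> k \<Longrightarrow> k \<le> t \<Longrightarrow> x \<in> I k \<Longrightarrow> is_monom n y \<Longrightarrow> mdvd x y \<Longrightarrow> y \<in> I k"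
    using ideals unfolding monomial_ideal_def by blast
  have monoI': "\<forall>x\<in>I'. is_monom n x" using monoI by (auto simp: I'_def)
  have inI': "x \<in> I'" if "1 \<le> k" "k \<le> t" "x \<in> I k" for k x
    using that by (auto simp: I'_def)
  define jj where "jj u = (LEAST k. 1 \<le> k \<and> k \<le> t \<and> u \<in> I k)" for u
  have jj: "1 \<le> jj u \<and> jj u \<le> t \<and> u \<in> I (jj u) \<and> (\<forall>k. 1 \<le> k \<longrightarrow> k < jj u \<longrightarrow> u \<notin> I k)"
    if "u \<in> I'" for u
  proof -
    from that obtain k where "1 \<le> k \<and> k \<le> t \<and> u \<in> I k" by (auto simp: I'_def)
    then have "1 \<le> jj u \<and> jj u \<le> t \<and> u \<in> I (jj u)" unfolding jj_def by (rule LeastI)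
    moreover have "\<forall>k. 1 \<le> k \<longrightarrow> k < jj u \<longrightarrow> u \<notin> I k"
      using not_less_Least calculation unfolding jj_def by fastforce
    ultimately show ?thesis by blast
  qed
  have Gk: "u \<in> mgens (I k)" if "u \<in> G" "1 \<le> k" "k \<le> t" "u \<in> I k" for u k
  proof (rule mgensI)
    show "u \<in> I k" using that(4) .
    fix x assume "x \<in> I k" "mdvd x u"
    then show "x = u" using mgens_min[of u I' x] that(1) inI'[OF that(2,3)] unfolding G_def by blast
  qed
  have Gjj: "u \<in> mgens (I (jj u))" if "u \<in> G" for u
    using that jj[of u] GI Gk by blast
  have setord: "\<And>k. 1 \<le> k \<Longrightarrow> k \<le> t \<Longrightarrow> set (ord k) = mgens (I k) \<and> distinct (ord k)"
    using lq unfolding lq_order_def by blast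
  define pos where "pos u = (THE p. p < length (ord (jj u)) \<and> ord (jj u) ! p = u)" for u
  have pos_eq: "pos u = p" if "u \<in> G" "p < length (ord (jj u))" "ord (jj u) ! p = u" for u p
  proof -
    have "distinct (ord (jj u))" using setord jj[of u] that GI by blast
    note dist = this
    show ?thesis unfolding pos_def
    proof (rule the_equality)
      show "p < length (ord (jj u)) \<and> ord (jj u) ! p = u" using that by simp
      fix pa assume "pa < length (ord (jj u)) \<and> ord (jj u) ! pa = u"
      then show "pa = p" using nth_eq_iff_index_eq[OF dist, of pa p] that by simp
    qed
  qed
  have pos: "pos u < length (ord (jj u)) \<and> ord (jj u) ! pos u = u" if "u \<in> G" for u
  proof -
    have "u \<in> set (ord (jj u))" using setord jj[of u] that GI Gjj by blast
    then obtain p where "p < length (ord (jj u))" "ord (jj u) ! p = u" by (auto simp: in_set_conv_nth)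
    then show ?thesis using pos_eq that by simp
  qed
  define N where "N = Suc (\<Sum>k\<in>{1..t}. length (ord k))"
  have posN: "pos u < N" if "u \<in> G" for u
  proof -
    have "length (ord (jj u)) \<le> (\<Sum>k\<in>{1..t}. length (ord k))"
      using jj[of u] that GI by (intro member_le_sum) auto
    then show ?thesis using pos[OF that] by (simp add: N_def)
  qed
  define f where "f u = jj u * N + pos u" for u
  have fless: "f u < f v \<longleftrightarrow> jj u < jj v \<or> (jj u = jj v \<and> pos u < pos v)" if "u \<in> G" "v \<in> G" for u v
    unfolding f_def using key_less posN that by blast
  have injf: "inj_on f G"
  proof
    fix u v assume uv: "u \<in> G" "v \<in> G" "f u = f v"
    then have "jj u = jj v" "pos u = pos v" using fless[of u v] fless[of v u] by (auto simp: not_less_iff_gr_or_eq)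
    then show "u = v" using pos uv by metis
  qed
  have finG: "finite G"
  proof -
    have "G \<subseteq> (\<Union>k\<in>{1..t}. set (ord k))"
      using Gjj jj GI setord by fastforce
    then show ?thesis by (rule finite_subset) auto
  qed
  have main: "generated_by_variables n (colon_ideal n (gen_ideal n {x\<in>G. f x < f v}) v)"
    if vG: "v \<in> G" for v
  proof -
    define E where "E = {x\<in>G. f x < f v}"
    define J where "J = colon_ideal n (gen_ideal n E) v"
    define j where "j = jj v"
    have vI: "v \<in> I'" using vG GI by blast
    have j: "1 \<le> j" "j \<le> t" "v \<in> mgens (I j)" using jj[OF vI] Gjj[OF vG] by (simp_all add: j_def)
    have vmon: "is_monom n v" using vG GI monoI' by blast
    have A1: "\<exists>e\<in>E. mdvd e w" if k1: "1 \<le> k" and kj: "k < j" and wk: "w \<in> I k" for w k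
    proof -
      have kt: "k \<le> t" using kj j by simp
      have "\<forall>x\<in>I k. is_monom n x" using monoI k1 kt by blast
      then obtain h where h: "h \<in> mgens (I k)" "mdvd h w" using exists_mgen wk by blast
      have hIk: "h \<in> I k" using h(1) by (rule mgensD)
      then have hI: "h \<in> I'" using k1 kt inI' by blast
      have hmon: "is_monom n h" using monoI'  hI by blast
      obtain g where g: "g \<in> G" "mdvd g h" using exists_mgen[OF monoI' hI] by (auto simp: G_def)
      show ?thesis
      proof (cases "jj g < j")
        case True
        then have "g \<in> E" using fless[of g v] g vG by (simp add: E_def j_def)
        then show ?thesis using g h mdvd_trans by blast
      next
        case False
        have jg: "1 \<le> jj g" "jj g \<le> t" using jj[of g] g GI by auto
        have "mdeg n g = d (jj g)" using single_degree jg Gjj g(1) by blast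
        moreover have "mdeg n h = d k" using single_degree k1 kt h(1) by blast
        moreover have "d k \<le> d (jj g)" using degs_sorted[of k "jj g"] k1 kj False jg by linarith
        ultimately have gh: "g = h" using mdvd_eq[OF hmon g(2)] by simp
        have "jj h \<le> k" using jj[of h] hI hIk k1 by (meson not_less)
        then show ?thesis using gh False kj by simp
      qed
    qed
    have A2: "\<exists>e\<in>E. mdvd e w" if wm: "w \<in> mgens (I j)" and pr: "precedes (ord j) w v" for w
    proof -
      have wIj: "w \<in> I j" using wm by (rule mgensD)
      then have wI: "w \<in> I'" using j(1,2) inI' by blast
      have wmon: "is_monom n w" using monoI' wI by blast
      obtain g where g: "g \<in> mgens I'" "mdvd g w" using exists_mgen[OF monoI' wI] by blast
      have gG: "g \<in> G" using g(1) by (simp add: G_def)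
      show ?thesis
      proof (cases "jj g < j")
        case True
        then have "f g < f v" using fless[OF gG vG] by (simp add: j_def)
        then have "g \<in> E" using gG by (simp add: E_def)
        then show ?thesis using g(2) by blast
      next
        case False
        have gI: "g \<in> I'" using gG GI by blast
        have jg: "1 \<le> jj g" "jj g \<le> t" using jj[OF gI] by auto
        have "mdeg n g = d (jj g)" using single_degree[OF jg Gjj[OF gG]] .
        moreover have "mdeg n w = d j" using single_degree[OF j(1,2) wm] .
        moreover have "d j \<le> d (jj g)" using degs_sorted[of j "jj g"] j(1) False jg by linarith
        ultimately have gw: "g = w" using mdvd_eq[OF wmon g(2)] by simp
        have "\<not> j < jj g" using jj[OF gI] j(1) wIj gw by blast
        then have jgj: "jj g = j" using False by simp
        obtain p q where pq: "p < q" "q < length (ord j)" "ord j ! p = w" "ord j ! q = v"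
          using pr unfolding precedes_def by blast
        have "pos v = q" using pos_eq[of v q] vG pq(2,4) by (simp add: j_def)
        moreover have "pos w = p" using pos_eq[of w p] gG gw pq(1,2,3) jgj by simp
        ultimately have "f w < f v" using fless[of w v] gG gw vG pq(1) jgj by (simp add: j_def)
        then have "w \<in> E" using gG gw by (simp add: E_def)
        then show ?thesis using mdvd_refl by blast
      qed
    qed
    have C: "x \<in> J" if ew: "\<exists>e\<in>E. mdvd e w" and xm: "is_monom n x" and wx: "mdvd w (\<lambda>i. x i + v i)" for w x
    proof -
      obtain e where e: "e \<in> E" "mdvd e w" using ew by blast
      have "mdvd e (\<lambda>i. x i + v i)" using mdvd_trans[OF e(2) wx] .
      then have "(\<lambda>i. x i + v i) \<in> gen_ideal n E" unfolding gen_ideal_def using e(1) add_monom[OF xm vmon] by blast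
      then show ?thesis unfolding J_def colon_ideal_def using xm by blast
    qed
    show ?thesis unfolding generated_by_variables_def E_def[symmetric] J_def[symmetric]
    proof
      fix m assume m: "m \<in> mgens J"
      then have mJ: "m \<in> J" and mmin: "\<And>x. x \<in> J \<Longrightarrow> mdvd x m \<Longrightarrow> x = m"
        using mgensD mgens_min by blast+
      from mJ obtain u where u: "u \<in> E" "mdvd u (\<lambda>i. m i + v i)" and mmon: "is_monom n m"
        unfolding J_def colon_ideal_def gen_ideal_def by blast
      have uG: "u \<in> G" using u by (simp add: E_def)
      have umon: "is_monom n u" using uG GI monoI' by blast
      have "mcolon u v \<in> J" using C[of u "mcolon u v"] u mdvd_refl mcolon_monom[OF umon] dvd_mcolon_add by blast
      then have mu: "m = mcolon u v" using mmin mcolon_dvd[OF u(2)] by auto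
      have "jj u < j \<or> (jj u = j \<and> pos u < pos v)" using fless[of u v] uG vG u by (simp add: E_def j_def)
      then show "mdeg n m = 1"
      proof
        assume k: "jj u < j"
        have k1: "1 \<le> jj u" "jj u \<le> t" using jj[of u] uG GI by auto
        have uk: "u \<in> mgens (I (jj u))" using Gjj uG by blast
        consider "mdeg n m = 0" | "mdeg n m = 1" | "mdeg n m > 1" by linarith
        then show ?thesis
        proof cases
          case 1
          then have "mdvd u v" using mcolon_deg0[OF umon] mu by simp
          then have "v \<in> I (jj u)" using closeI[of "jj u" u v] k1 mgensD[OF uk] vmon by blast
          then show ?thesis using jj[of v] vG GI k k1 by (auto simp: j_def)
        next
          case 2 then show ?thesis .
        next
          case 3
          then obtain w where w: "w \<in> (\<Union>k\<in>{1..<j}. I k) \<or> (w \<in> mgens (I j) \<and> precedes (ord j) w v)"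
            "mdeg n (mcolon w v) = 1" "mdvd (mcolon w v) (mcolon u v)"
            using star[of "jj u" j u v] k k1 j uk mu by auto
          have e: "\<exists>e\<in>E. mdvd e w" using w(1) A1 A2 by auto
          have wmon: "is_monom n w" using w(1) monoI j mgensD by (metis UN_E atLeastLessThan_iff order_less_imp_le order_less_le_trans)
          have "mcolon w v \<in> J" using C[OF e mcolon_monom[OF wmon]] dvd_mcolon_add by blast
          then have "mcolon w v = m" using mmin w(3) mu by auto
          then show ?thesis using w(2) by simp
        qed
      next
        assume k: "jj u = j \<and> pos u < pos v"
        define us where "us = ord j"
        define q where "q = pos v"
        have lqj: "lq_order n (I j) us" using lq j by (simp add: us_def)
        have q: "1 \<le> q" "q < length us" "us ! q = v" using k pos[of v] vG
          by (auto simp: q_def us_def j_def)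
        have gbv: "generated_by_variables n (colon_ideal n (gen_ideal n (set (take q us))) v)"
          using lqj q unfolding lq_order_def by auto
        define K where "K = colon_ideal n (gen_ideal n (set (take q us))) v"
        have uin: "u \<in> set (take q us)"
          using pos[of u] uG k q by (auto simp: in_set_conv_nth us_def q_def intro!: exI[of _ "pos u"])
        have "m \<in> K" unfolding K_def colon_ideal_def gen_ideal_def
          using mmon add_monom[OF mmon vmon] uin u(2) by blast
        moreover have "\<forall>x\<in>K. is_monom n x" by (simp add: K_def colon_ideal_def)
        ultimately obtain g where g: "g \<in> mgens K" "mdvd g m" using exists_mgen by blast
        have g1: "mdeg n g = 1" using gbv g unfolding generated_by_variables_def K_def by blast
        have "g \<in> K" using g(1) by (rule mgensD)
        then obtain w where w: "w \<in> set (take q us)" "mdvd w (\<lambda>i. g i + v i)" and gmon: "is_monom n g"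
          unfolding K_def colon_ideal_def gen_ideal_def by blast
        obtain p where p: "p < q" "us ! p = w" using w(1) q by (auto simp: in_set_conv_nth)
        have "precedes us w v" unfolding precedes_def using p q by blast
        moreover have "w \<in> mgens (I j)" using in_set_takeD[OF w(1)] lqj unfolding lq_order_def by blast
        ultimately have "\<exists>e\<in>E. mdvd e w" using A2 by (simp add: us_def)
        then have "g \<in> J" using C gmon w(2) by blast
        then have "g = m" using mmin g by blast
        then show ?thesis using g1 by simp
      qed
    qed
  qed
  obtain L where L: "distinct L" "set L = G"
    "\<forall>i<length L. L ! i \<in> G \<and> set (take i L) = {x\<in>G. f x < f (L ! i)}"
    using list_by_key[OF finG injf] by blast
  have "lq_order n I' L" unfolding lq_order_def
    using L main by (auto simp: G_def)
  then show ?thesis unfolding has_linear_quotients_def I'_def by blast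
qed

end
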